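(* Let $f:\mathbb{R}^2\to\mathbb{R}^2$ be a Topologically Anosov homeomorphism and $z_0\in\mathrm{Fix}(f)$. If there exists $x\neq z_0$ with $\alpha(x)=\omega(x)=\{z_0\}$, then there exist $y_0\neq z_0$ and $z\in\mathbb{R}^2$ such that $y_0\in\omega(z)$.
   Context: A homeomorphism $f:\mathbb{R}^2\to\mathbb{R}^2$ is Topologically Anosov (TA) if: (i) there is a continuous strictly positive $\epsilon:\mathbb{R}^2\to\mathbb{R}$ such that for all $x\neq y$ there is $k\in\mathbb{Z}$ with $\|f^k(x)-f^k(y)\|>\epsilon(f^k(x))$; and (ii) for every continuous strictly positive $\epsilon$ there is a continuous strictly positive $\delta$ such that every $\delta$-pseudo-orbit is $\epsilon$-shadowed by an orbit. A $\delta$-pseudo-orbit is a sequence $(x_n)_{n\in\mathbb{Z}}$ with $\|f(x_n)-x_{n+1}\|<\delta(f(x_n))$; it is $\epsilon$-shadowed by the orbit of $x$ if $\|x_n-f^n(x)\|<\epsilon(x_n)$ for all $n$. $\alpha(x),\omega(x)$ are the $\alpha$- and $\omega$-limit sets. *)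

theory Defs
  imports "HOL-Analysis.Analysis"
begin

type_synonym R2 = "real ^ 2"

definition iter_int :: "(R2 \<Rightarrow> R2) \<Rightarrow> int \<Rightarrow> R2 \<Rightarrow> R2" where
  "iter_int f k = (if 0 \<le> k then f ^^ nat k else inv f ^^ nat (- k))"

definition pos_cont_fun :: "(R2 \<Rightarrow> real) \<Rightarrow> bool" where
  "pos_cont_fun e \<longleftrightarrow> continuous_on UNIV e \<and> (\<forall>x. 0 < e x)"

definition pseudo_orbit :: "(R2 \<Rightarrow> R2) \<Rightarrow> (R2 \<Rightarrow> real) \<Rightarrow> (int \<Rightarrow> R2) \<Rightarrow> bool" where
  "pseudo_orbit f \<delta> xs \<longleftrightarrow> (\<forall>n. norm (f (xs n) - xs (n + 1)) < \<delta> (f (xs n)))"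

definition shadows :: "(R2 \<Rightarrow> R2) \<Rightarrow> (R2 \<Rightarrow> real) \<Rightarrow> (int \<Rightarrow> R2) \<Rightarrow> R2 \<Rightarrow> bool" where
  "shadows f \<epsilon> xs x \<longleftrightarrow> (\<forall>n. norm (xs n - iter_int f n x) < \<epsilon> (xs n))"

definition topologically_anosov :: "(R2 \<Rightarrow> R2) \<Rightarrow> bool" where
  "topologically_anosov f \<longleftrightarrow>
     (\<exists>g. homeomorphism UNIV UNIV f g) \<and>
     (\<exists>\<epsilon>. pos_cont_fun \<epsilon> \<and>
        (\<forall>x y. x \<noteq> y \<longrightarrow>
           (\<exists>k::int. norm (iter_int f k x - iter_int f k y) > \<epsilon> (iter_int f k x)))) \<and>
     (\<forall>\<epsilon>. pos_cont_fun \<epsilon> \<longrightarrow>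
        (\<exists>\<delta>. pos_cont_fun \<delta> \<and>
           (\<forall>xs. pseudo_orbit f \<delta> xs \<longrightarrow> (\<exists>x. shadows f \<epsilon> xs x))))"

definition omega_limit :: "(R2 \<Rightarrow> R2) \<Rightarrow> R2 \<Rightarrow> R2 set" where
  "omega_limit f x = {y. \<forall>e>0. \<forall>N::nat. \<exists>n\<ge>N. dist ((f ^^ n) x) y < e}"

definition alpha_limit :: "(R2 \<Rightarrow> R2) \<Rightarrow> R2 \<Rightarrow> R2 set" where
  "alpha_limit f x = omega_limit (inv f) x"

end

theory Submission
  imports Defs
begin

lemma iter_int_succ:
  assumes "bij f"
  shows "iter_int f (k+1) y = f (iter_int f k y)"
proof (cases "0 \<le> k")
  case True
  then have "nat (k+1) = Suc (nat k)" by simp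
  then show ?thesis using True by (simp add: iter_int_def)
next
  case False
  obtain m where m: "nat (-k) = Suc m" "nat (-(k+1)) = m"
  proof -
    have "nat (-k) = Suc (nat (-(k+1)))" using False by simp
    then show ?thesis using that by blast
  qed
  have "f (inv f ((inv f ^^ m) y)) = (inv f ^^ m) y"
    using assms by (simp add: bij_is_surj surj_f_inv_f)
  moreover have "0 \<le> k+1 \<Longrightarrow> m = 0" using False m by auto
  ultimately show ?thesis using False m by (auto simp: iter_int_def)
qed

lemma mod_succ_int:
  fixes n P :: int
  assumes "P > 0"
  shows "(n+1) mod P = (if n mod P = P - 1 then 0 else n mod P + 1)"
proof -
  have "(n+1) mod P = (n mod P + 1) mod P" by (simp add: mod_add_left_eq)
  moreover have "0 \<le> n mod P" "n mod P < P" using assms by auto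
  ultimately show ?thesis by (auto simp: mod_pos_pos_trivial)
qed

theorem mainTheorem12:
  fixes f :: "R2 \<Rightarrow> R2" and z0 :: R2
  assumes "topologically_anosov f"
    and "f z0 = z0"
    and "\<exists>x. x \<noteq> z0 \<and> alpha_limit f x = {z0} \<and> omega_limit f x = {z0}"
  shows "\<exists>y0 z. y0 \<noteq> z0 \<and> y0 \<in> omega_limit f z"
proof -
  obtain x where x: "x \<noteq> z0" "z0 \<in> omega_limit (inv f) x" "z0 \<in> omega_limit f x"
    using assms(3) unfolding alpha_limit_def by auto
  obtain g where hg: "homeomorphism UNIV UNIV f g"
    using assms(1) unfolding topologically_anosov_def by auto
  have hg1: "\<And>a. g (f a) = a" and hg2: "\<And>a. f (g a) = a"
    using hg unfolding homeomorphism_def by auto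
  have bij: "bij f" by (rule o_bij[of g f]) (auto simp: fun_eq_iff hg1 hg2)
  define d where "d = dist x z0 / 2"
  have d: "d > 0" using x(1) by (simp add: d_def)
  have pe: "pos_cont_fun (\<lambda>_. d)" using d by (simp add: pos_cont_fun_def)
  obtain \<delta> where pd: "pos_cont_fun \<delta>"
    and sh: "\<And>xs. pseudo_orbit f \<delta> xs \<Longrightarrow> \<exists>z. shadows f (\<lambda>_. d) xs z"
    using assms(1) pe unfolding topologically_anosov_def by blast
  have d0: "\<delta> z0 > 0" and cd: "continuous_on UNIV \<delta>" using pd by (auto simp: pos_cont_fun_def)
  have "isCont \<delta> z0" using cd by (simp add: continuous_on_eq_continuous_at)
  then obtain r where r: "r > 0" "\<And>y. dist y z0 < r \<Longrightarrow> dist (\<delta> y) (\<delta> z0) < \<delta> z0 / 2"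
  proof -
    have "\<delta> z0 / 2 > 0" using d0 by simp
    then show ?thesis using \<open>isCont \<delta> z0\<close> that unfolding continuous_at_eps_delta by blast
  qed
  define \<rho> where "\<rho> = min r (\<delta> z0 / 4)"
  have \<rho>: "\<rho> > 0" using r d0 by (simp add: \<rho>_def)
  obtain N1 where N1: "N1 \<ge> 1" "dist ((f ^^ N1) x) z0 < \<rho>"
    using x(3) \<rho> unfolding omega_limit_def by blast
  obtain M where M: "dist ((inv f ^^ M) x) z0 < \<rho>"
    using x(2) \<rho> unfolding omega_limit_def by blast
  define N where "N = N1 - 1"
  have N: "(f ^^ Suc N) x = (f ^^ N1) x" using N1 by (simp add: N_def)
  define P :: int where "P = int N + int M + 1"
  have P: "P > 0" by (simp add: P_def)
  define xs where "xs n = iter_int f (n mod P - int M) x" for n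
  have jump: "norm ((f ^^ Suc N) x - (inv f ^^ M) x) < \<delta> ((f ^^ Suc N) x)"
  proof -
    have "norm ((f ^^ Suc N) x - (inv f ^^ M) x) \<le> dist ((f ^^ Suc N) x) z0 + dist ((inv f ^^ M) x) z0"
      by (metis dist_commute dist_norm dist_triangle)
    also have "\<dots> < 2 * \<rho>" using N1 M N by simp
    also have "\<dots> \<le> \<delta> z0 / 2" by (simp add: \<rho>_def)
    also have "\<dots> < \<delta> ((f ^^ Suc N) x)"
    proof -
      have "dist ((f ^^ Suc N) x) z0 < r" using N N1 \<rho>_def by simp
      then have "dist (\<delta> ((f ^^ Suc N) x)) (\<delta> z0) < \<delta> z0 / 2" by (rule r(2))
      then show ?thesis unfolding dist_real_def by arith
    qed
    finally show ?thesis .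
  qed
  have po: "pseudo_orbit f \<delta> xs"
    unfolding pseudo_orbit_def
  proof
    fix n
    show "norm (f (xs n) - xs (n + 1)) < \<delta> (f (xs n))"
    proof (cases "n mod P = P - 1")
      case True
      then have "xs n = iter_int f (int N) x" by (simp add: xs_def P_def)
      then have e1: "xs n = (f ^^ N) x" by (simp add: iter_int_def)
      have "xs (n+1) = (inv f ^^ M) x" using True mod_succ_int[OF P, of n]
        by (simp add: xs_def iter_int_def)
      then show ?thesis using jump e1 by simp
    next
      case False
      then have "xs (n+1) = f (xs n)" using mod_succ_int[OF P, of n]
        using iter_int_succ[OF bij, of "n mod P - int M" x]
        by (simp add: xs_def algebra_simps)
      then show ?thesis using pd by (simp add: pos_cont_fun_def)
    qed
  qed
  obtain z where z: "shadows f (\<lambda>_. d) xs z" using sh po by blast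
  define s where "s k = (f ^^ (k * nat P + M)) z" for k
  have sin: "s k \<in> cball x d" for k
  proof -
    have "(int k * P + int M) mod P = int M" using P by (simp add: P_def)
    then have "xs (int k * P + int M) = x" by (simp add: xs_def iter_int_def)
    moreover have "iter_int f (int k * P + int M) z = s k"
      using P by (simp add: iter_int_def s_def nat_add_distrib nat_mult_distrib)
    ultimately show ?thesis using z unfolding shadows_def
      by (metis dist_norm less_imp_le mem_cball)
  qed
  obtain y \<phi> where y: "y \<in> cball x d" "strict_mono \<phi>" "(s \<circ> \<phi>) \<longlonglongrightarrow> y"
    using compact_cball[of x d] sin unfolding compact_def by blast
  have yne: "y \<noteq> z0"
  proof
    assume "y = z0"
    then have "dist x z0 \<le> d" using y(1) by simp
    then show False using d d_def by simp
  qed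
  have "y \<in> omega_limit f z"
    unfolding omega_limit_def
  proof (intro CollectI allI impI)
    fix e :: real and K :: nat
    assume e: "e > 0"
    then obtain J where J: "\<And>j. j \<ge> J \<Longrightarrow> dist ((s \<circ> \<phi>) j) y < e"
      using y(3) unfolding lim_sequentially by blast
    define j where "j = max J K"
    have "\<phi> j \<ge> j" using y(2) by (simp add: strict_mono_imp_increasing)
    moreover have "nat P \<ge> 1" using P by simp
    ultimately have "\<phi> j * 1 \<le> \<phi> j * nat P" by (intro mult_le_mono2)
    moreover have "K \<le> \<phi> j" using \<open>\<phi> j \<ge> j\<close> unfolding j_def by simp
    ultimately have "\<phi> j * nat P + M \<ge> K" by linarith
    moreover have "dist ((f ^^ (\<phi> j * nat P + M)) z) y < e"
      using J[of j] unfolding j_def s_def by simp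
    ultimately show "\<exists>n\<ge>K. dist ((f ^^ n) z) y < e" by blast
  qed
  then show ?thesis using yne by blast
qed

end
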